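(* Let $m,n,k,a$ be natural numbers with $n\geq 1$, $k\geq 1$, $m\geq 1$ and $1\leq a\leq 9$. Then the equation $$C_nC_{n+1}\cdots C_{n+k} = a\left(\frac{10^m-1}{9}\right)$$ has no solution. That is, no product of two or more consecutive Lucas-balancing numbers (starting from index at least $1$) is a decimal repdigit.
   Context: The Lucas-balancing sequence $(C_n)_{n\geq 0}$ is defined by $C_0=1$, $C_1=3$ and $C_{n+1}=6C_n-C_{n-1}$ for $n\geq 1$. For $1\le a\le 9$ and $m\ge 1$, the number $a\frac{10^m-1}{9}$ is the decimal integer consisting of $m$ copies of the digit $a$. *)

theory Defs
  imports Main
begin

text \<open>The sequence is increasing and positive, so computing in nat is exact
  (6 C(n+1) \<ge> C n); we nevertheless define it over int to avoid truncation.\<close>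
fun lucas_bal :: "nat \<Rightarrow> int" where
  "lucas_bal 0 = 1"
| "lucas_bal (Suc 0) = 3"
| "lucas_bal (Suc (Suc n)) = 6 * lucas_bal (Suc n) - lucas_bal n"

end

theory Submission
  imports Defs
begin

lemma lb_pos: "lucas_bal n > 0 \<and> lucas_bal (Suc n) \<ge> 3 * lucas_bal n"
  by (induction n) auto

lemma lb_mono_suc: "lucas_bal n \<le> lucas_bal (Suc n)"
  using lb_pos[of n] by auto

lemma lb_mono: "i \<le> j \<Longrightarrow> lucas_bal i \<le> lucas_bal j"
  by (induction j rule: dec_induct) (use lb_mono_suc order_trans in blast)+

lemma lb_pairs:
  assumes "(lucas_bal 0 mod M, lucas_bal 1 mod M) \<in> S"
    and "\<And>x y. (x, y) \<in> S \<Longrightarrow> (y, (6*y - x) mod M) \<in> S"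
  shows "(lucas_bal n mod M, lucas_bal (Suc n) mod M) \<in> S"
proof (induction n)
  case 0 then show ?case using assms(1) by simp
next
  case (Suc n)
  have "lucas_bal (Suc (Suc n)) mod M = (6 * (lucas_bal (Suc n) mod M) - lucas_bal n mod M) mod M"
    proof -
    have "lucas_bal (Suc (Suc n)) mod M = ((6 * lucas_bal (Suc n)) mod M - lucas_bal n mod M) mod M"
      by (simp add: mod_diff_eq)
    also have "(6 * lucas_bal (Suc n)) mod M = (6 * (lucas_bal (Suc n) mod M)) mod M"
      by (simp add: mod_mult_right_eq)
    also have "((6 * (lucas_bal (Suc n) mod M)) mod M - lucas_bal n mod M) mod M = (6 * (lucas_bal (Suc n) mod M) - lucas_bal n mod M) mod M"
      by (simp add: mod_diff_left_eq)
    finally show ?thesis .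
  qed
  then show ?case using assms(2)[OF Suc] by simp
qed

lemma lb_mod8: "lucas_bal n mod 8 \<in> {1,3}"
proof -
  have "(lucas_bal n mod 8, lucas_bal (Suc n) mod 8) \<in> {(1,3),(3,1)}"
    by (rule lb_pairs) auto
  then show ?thesis by auto
qed

lemma lb_mod5: "lucas_bal n mod 5 \<noteq> 0"
proof -
  have "(lucas_bal n mod 5, lucas_bal (Suc n) mod 5) \<in> {(1,3),(3,2),(2,4),(4,2),(2,3),(3,1)}"
    by (rule lb_pairs) auto
  then show ?thesis by auto
qed

lemma lb_mod7: "lucas_bal n mod 7 \<noteq> 0"
proof -
  have "(lucas_bal n mod 7, lucas_bal (Suc n) mod 7) \<in> {(1,3),(3,3),(3,1)}"
    by (rule lb_pairs) auto
  then show ?thesis by auto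
qed

lemma prod_modM: "finite A \<Longrightarrow> 1 mod M \<in> T \<Longrightarrow> (\<And>i. lucas_bal i mod M \<in> T)
  \<Longrightarrow> (\<And>x y. x \<in> T \<Longrightarrow> y \<in> T \<Longrightarrow> (x*y) mod M \<in> T)
  \<Longrightarrow> (\<Prod>i\<in>A. lucas_bal i) mod M \<in> T"
proof (induction A rule: finite_induct)
  case empty then show ?case by simp
next
  case (insert x F)
  have "(\<Prod>i\<in>insert x F. lucas_bal i) mod M = ((lucas_bal x mod M) * ((\<Prod>i\<in>F. lucas_bal i) mod M)) mod M"
    using insert by (simp add: mod_mult_eq)
  then show ?case using insert by auto
qed

lemma lb_mod5': "lucas_bal n mod 5 \<in> {1,2,3,4}"
proof -
  define r where "r = lucas_bal n mod 5"
  have "0 \<le> r" "r < 5" "r \<noteq> 0" using lb_mod5[of n] by (auto simp: r_def)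
  then have "r = 1 \<or> r = 2 \<or> r = 3 \<or> r = 4" by presburger
  then show ?thesis by (auto simp: r_def)
qed

lemma lb_mod7': "lucas_bal n mod 7 \<in> {1,2,3,4,5,6}"
proof -
  define r where "r = lucas_bal n mod 7"
  have "0 \<le> r" "r < 7" "r \<noteq> 0" using lb_mod7[of n] by (auto simp: r_def)
  then have "r = 1 \<or> r = 2 \<or> r = 3 \<or> r = 4 \<or> r = 5 \<or> r = 6" by presburger
  then show ?thesis by (auto simp: r_def)
qed

lemma P8: "finite A \<Longrightarrow> (\<Prod>i\<in>A. lucas_bal i) mod 8 \<in> {1,3}"
  by (rule prod_modM) (use lb_mod8 in auto)

lemma P5: "finite A \<Longrightarrow> (\<Prod>i\<in>A. lucas_bal i) mod 5 \<in> {1,2,3,4}"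
  by (rule prod_modM) (use lb_mod5' in auto)

lemma P7: "finite A \<Longrightarrow> (\<Prod>i\<in>A. lucas_bal i) mod 7 \<in> {1,2,3,4,5,6}"
  by (rule prod_modM) (use lb_mod7' in auto)

lemma lb_vals: "lucas_bal 1 = 3" "lucas_bal 2 = 17" "lucas_bal 3 = 99"
  by (simp_all add: eval_nat_numeral)

lemma prod_split:
  assumes "k \<ge> 1"
  shows "(\<Prod>i=n..n+k. lucas_bal i) = lucas_bal n * lucas_bal (Suc n) * (\<Prod>i=n+2..n+k. lucas_bal i)"
proof -
  have "(\<Prod>i=n..n+k. lucas_bal i) = lucas_bal n * (\<Prod>i=Suc n..n+k. lucas_bal i)"
    by (rule prod.atLeast_Suc_atMost) simp
  also have "(\<Prod>i=Suc n..n+k. lucas_bal i) = lucas_bal (Suc n) * (\<Prod>i=Suc (Suc n)..n+k. lucas_bal i)"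
    by (rule prod.atLeast_Suc_atMost) (use assms in simp)
  finally show ?thesis by (simp add: numeral_2_eq_2)
qed

lemma Q_pos: "(\<Prod>i\<in>A. lucas_bal i) \<ge> 1"
proof -
  have "(\<Prod>i\<in>A. lucas_bal i) > 0" by (rule prod_pos) (use lb_pos in auto)
  then show ?thesis by simp
qed

theorem theorem4:
  fixes m n k a :: nat
  assumes "n \<ge> 1" and "k \<ge> 1" and "m \<ge> 1" and "1 \<le> a" and "a \<le> 9"
  shows "(\<Prod>i=n..n+k. lucas_bal i) \<noteq> int a * ((10 ^ m - 1) div 9)"
proof
  define P where "P = (\<Prod>i=n..n+k. lucas_bal i)"
  define R :: int where "R = (10 ^ m - 1) div 9"
  assume "(\<Prod>i=n..n+k. lucas_bal i) = int a * ((10 ^ m - 1) div 9)"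
  then have PR: "P = int a * R" by (simp add: P_def R_def)
  define Q where "Q = (\<Prod>i=n+2..n+k. lucas_bal i)"
  have PQ: "P = lucas_bal n * lucas_bal (Suc n) * Q"
    unfolding P_def Q_def using prod_split[OF assms(2)] by simp
  have Q1: "Q \<ge> 1" unfolding Q_def by (rule Q_pos)
  have Cn: "lucas_bal n \<ge> 3" using lb_mono[of 1 n] assms(1) lb_vals by simp
  have Cn1: "lucas_bal (Suc n) \<ge> 17" using lb_mono[of 2 "Suc n"] assms(1) lb_vals by simp
  have "lucas_bal n * lucas_bal (Suc n) \<ge> 3 * 17"
    using Cn Cn1 by (intro mult_mono) auto
  then have P51: "P \<ge> 51 * 1" unfolding PQ using Q1
    by (intro mult_mono) auto
  have P8': "P mod 8 \<in> {1,3}" unfolding P_def by (rule P8) simp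
  have P5': "P mod 5 \<noteq> 0" using P5[of "{n..n+k}"] unfolding P_def by auto
  have P7': "P mod 7 \<noteq> 0" using P7[of "{n..n+k}"] unfolding P_def by auto
  have m9: "(10::int) ^ m mod 9 = 1"
    using power_mod[of "10::int" 9 m] by simp
  have d9: "(9::int) dvd 10 ^ m - 1"
    using m9 by (simp add: mod_eq_dvd_iff [symmetric] mod_diff_eq[symmetric] dvd_eq_mod_eq_0)
  then have R9: "9 * R = 10 ^ m - 1" unfolding R_def by simp
  have a_cases: "a \<in> {1,2,3,4,5,6,7,8,9}" using assms(4,5) by auto
  show False
  proof (cases "m \<ge> 3")
    case True
    have "(10::int) ^ m = 10 ^ (m - 3) * 1000"
    proof -
      have "m = (m-3)+3" using True by simp
      then have "(10::int)^m = 10^(m-3)*10^3" by (metis power_add)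
      then show ?thesis by simp
    qed
    then have "(10::int) ^ m mod 8 = 0" by simp
    then have "(10 ^ m - 1 :: int) mod 8 = 7"
    proof -
      have "(10 ^ m - 1 :: int) mod 8 = (10^m mod 8 - 1) mod 8" by (simp add: mod_diff_left_eq)
      then show ?thesis using \<open>(10::int) ^ m mod 8 = 0\<close> by simp
    qed
    then have "(9 * R) mod 8 = 7" using R9 by simp
    moreover have "9*R = R + R*8" by linarith
    ultimately have "(R + R*8) mod 8 = 7" by metis
    then have R8: "R mod 8 = 7" by (simp only: mod_mult_self1)
    have "P mod 8 = (int a * 7) mod 8" 
      unfolding PR using R8 mod_mult_right_eq[of "int a" R 8, symmetric] by simp
    then have "a = 5 \<or> a = 7" using P8' a_cases by (elim insertE) auto
    then show False
    proof
      assume "a = 5" then have "P mod 5 = 0" using PR by simp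
      then show False using P5' by simp
    next
      assume "a = 7" then have "P mod 7 = 0" using PR by simp
      then show False using P7' by simp
    qed
  next
    case False
    then have "m = 1 \<or> m = 2" using assms(3) by auto
    then show False
    proof
      assume "m = 1" then have "R = 1" unfolding R_def by simp
      then show False using PR P51 assms(5) by simp
    next
      assume "m = 2" then have "R = 11" unfolding R_def by simp
      then have "P = 11 * int a" using PR by simp
      then have "P = 99" using P51 P8' P5' P7' a_cases by (elim insertE) auto
      show False
      proof (cases "n = 1")
        case True
        then have "P = 51 * Q" using PQ lb_vals by (simp add: numeral_2_eq_2)
        then have "51 * Q = 99" using \<open>P = 99\<close> by simp
        show False
        proof (cases "Q \<ge> 2")
          case True then show False using \<open>51 * Q = 99\<close> by linarith
        next
          case False then have "Q = 1" using Q1 by linarith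
          then have "51 * Q = 51" by simp
          then show False using \<open>51 * Q = 99\<close> by linarith
        qed
      next
        case False
        then have "lucas_bal n \<ge> 17" using lb_mono[of 2 n] assms(1) lb_vals by simp
        moreover have "lucas_bal (Suc n) \<ge> 99" using lb_mono[of 3 "Suc n"] False assms(1) lb_vals by simp
        ultimately have "lucas_bal n * lucas_bal (Suc n) \<ge> 17 * 99"
          by (intro mult_mono) auto
        then have "P \<ge> (17 * 99) * 1" unfolding PQ using Q1 by (rule mult_mono) (use lb_pos[of n] lb_pos[of "Suc n"] in auto)
        then show False using \<open>P = 99\<close> by simp
      qed
    qed
  qed
qed

end
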